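(* Let $a$ be a positive real number. For $n\ge1$ let $D_n(a,1)$ be the $n\times n$ matrix whose $(i,j)$ entry is $-a$ if $i=j$, $1$ if $j=i+1$, $a$ if $i=j+1$, $-1$ if $i=j+2$, and $0$ otherwise; set $d_{-1}=0$, $d_0=1$ and $d_n=|D_n(a,1)|$ for $n\ge1$. Let $E_n(a,1)$ be the $(n+1)\times n$ matrix whose $(i,j)$ entry is $-a$ if $i=j$, $1$ if $j=i+1$, $a$ if $i=j+1$, $-1$ if $i=j+2$, and $0$ otherwise, and for $1\le k\le n+1$ let $E_n^k(a,1)$ be obtained from $E_n(a,1)$ by deleting its $k$-th row. Then for $1\le k\le n+1$, $$|E_n^k(a,1)|=(-1)^{n-k+1}(d_{k-1}d_{n-k+1}-d_{k-2}d_{n-k}),$$ and for every $k\ge0$, $$d_k=\frac{1}{k!}\frac{d^k}{dx^k}\left(\frac{1}{1+ax+ax^2+x^3}\right)\Big|_{x=0}.$$ Moreover, if $x^3+ax^2+ax+1=0$ has three distinct (complex) solutions $\alpha,\beta,\gamma$, then for $k\ge1$ $$d_k=\frac{1}{\alpha^{k+1}(\alpha-\beta)(\gamma-\alpha)}+\frac{1}{\beta^{k+1}(\alpha-\beta)(\beta-\gamma)}+\frac{1}{\gamma^{k+1}(\gamma-\alpha)(\beta-\gamma)}.$$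
   Context: $|M|$ denotes the determinant of a square matrix $M$. *)

theory Defs
  imports Complex_Main "HOL-Analysis.Derivative" "Jordan_Normal_Form.Determinant"
begin

definition band_entry :: "real \<Rightarrow> nat \<Rightarrow> nat \<Rightarrow> real" where
  "band_entry a i j =
     (if i = j then - a
      else if j = i + 1 then 1
      else if i = j + 1 then a
      else if i = j + 2 then -1
      else 0)"

(* D_n(a,1): n x n matrix (JNF matrices are 0-based, so shift indices by 1) *)
definition Dmat :: "real \<Rightarrow> nat \<Rightarrow> real mat" where
  "Dmat a n = mat n n (\<lambda>(i, j). band_entry a (i + 1) (j + 1))"

definition Emat :: "real \<Rightarrow> nat \<Rightarrow> real mat" where
  "Emat a n = mat (n + 1) n (\<lambda>(i, j). band_entry a (i + 1) (j + 1))"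

(* delete the k-th row (1-based) of a matrix *)
definition delete_row :: "'a mat \<Rightarrow> nat \<Rightarrow> 'a mat" where
  "delete_row A k = mat (dim_row A - 1) (dim_col A)
      (\<lambda>(i, j). A $$ (if i + 1 < k then i else i + 1, j))"

definition Ekmat :: "real \<Rightarrow> nat \<Rightarrow> nat \<Rightarrow> real mat" where
  "Ekmat a n k = delete_row (Emat a n) k"

definition dseq :: "real \<Rightarrow> int \<Rightarrow> real" where
  "dseq a m = (if m < 0 then 0 else if m = 0 then 1 else det (Dmat a (nat m)))"

end

theory Submission
  imports Defs "HOL-Analysis.FPS_Convergence"
begin


definition bz :: "real \<Rightarrow> int \<Rightarrow> real" where
  "bz a d = (if d = 0 then - a else if d = -1 then 1 else if d = 1 then a else if d = 2 then -1 else 0)"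

lemma band_bz: "band_entry a i j = bz a (int i - int j)"
  unfolding band_entry_def bz_def by auto

lemma det_expand_col:
  assumes A: "A \<in> carrier_mat n n" and c: "c < n" and S: "S \<subseteq> {..<n}"
    and z: "\<And>i. i < n \<Longrightarrow> i \<notin> S \<Longrightarrow> A $$ (i,c) = 0"
  shows "det A = (\<Sum>i\<in>S. A $$ (i,c) * cofactor A i c)"
proof -
  have "det A = (\<Sum>i<n. A $$ (i,c) * cofactor A i c)"
    by (rule laplace_expansion_column[OF A c])
  also have "\<dots> = (\<Sum>i\<in>S. A $$ (i,c) * cofactor A i c)"
    by (rule sum.mono_neutral_right) (use S z in auto)
  finally show ?thesis .
qed

lemma det_zero_col:
  assumes A: "A \<in> carrier_mat n n" and c: "c < n"
    and z: "\<And>i. i < n \<Longrightarrow> A $$ (i,c) = 0"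
  shows "det A = 0"
  using det_expand_col[OF A c, of "{}"] z by auto

lemma det_col_split:
  assumes A: "A \<in> carrier_mat n n" and B: "B \<in> carrier_mat n n" and C: "C \<in> carrier_mat n n"
    and c: "c < n"
    and eB: "\<And>i j. i < n \<Longrightarrow> j < n \<Longrightarrow> j \<noteq> c \<Longrightarrow> B $$ (i,j) = A $$ (i,j)"
    and eC: "\<And>i j. i < n \<Longrightarrow> j < n \<Longrightarrow> j \<noteq> c \<Longrightarrow> C $$ (i,j) = A $$ (i,j)"
    and s: "\<And>i. i < n \<Longrightarrow> A $$ (i,c) = B $$ (i,c) + C $$ (i,c)"
  shows "det A = det B + det C"
proof -
  have cf: "cofactor X i c = cofactor A i c" if X: "X \<in> carrier_mat n n"
    and eX: "\<And>i j. i < n \<Longrightarrow> j < n \<Longrightarrow> j \<noteq> c \<Longrightarrow> X $$ (i,j) = A $$ (i,j)" and i: "i < n" for X i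
  proof -
    have "mat_delete X i c = mat_delete A i c"
      unfolding mat_delete_def using X A c
      by (intro eq_matI) (auto intro!: eX)
    thus ?thesis unfolding cofactor_def by simp
  qed
  have "det A = (\<Sum>i<n. A $$ (i,c) * cofactor A i c)"
    by (rule laplace_expansion_column[OF A c])
  also have "\<dots> = (\<Sum>i<n. B $$ (i,c) * cofactor B i c) + (\<Sum>i<n. C $$ (i,c) * cofactor C i c)"
    by (simp add: cf[OF B eB] cf[OF C eC] s distrib_right sum.distrib)
  also have "\<dots> = det B + det C"
    by (simp add: laplace_expansion_column[OF B c, symmetric] laplace_expansion_column[OF C c, symmetric])
  finally show ?thesis .
qed

lemma det_block_ll:
  fixes A :: "'a :: idom mat"
  assumes A: "A \<in> carrier_mat n n" and p: "p \<le> n"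
    and z: "\<And>i j. p \<le> i \<Longrightarrow> i < n \<Longrightarrow> j < p \<Longrightarrow> A $$ (i,j) = 0"
  shows "det A = det (mat p p (\<lambda>(i,j). A $$ (i,j))) * det (mat (n-p) (n-p) (\<lambda>(i,j). A $$ (i+p,j+p)))"
proof -
  have "A = four_block_mat (mat p p (\<lambda>(i,j). A $$ (i,j))) (mat p (n-p) (\<lambda>(i,j). A $$ (i,j+p)))
     (0\<^sub>m (n-p) p) (mat (n-p) (n-p) (\<lambda>(i,j). A $$ (i+p,j+p)))"
    using A p by (intro eq_matI) (auto simp: four_block_mat_def Let_def z)
  then show ?thesis
    by (metis det_four_block_mat_lower_left_zero mat_carrier)
qed

lemma det_block_ur:
  fixes A :: "'a :: idom mat"
  assumes A: "A \<in> carrier_mat n n" and p: "p \<le> n"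
    and z: "\<And>i j. i < p \<Longrightarrow> p \<le> j \<Longrightarrow> j < n \<Longrightarrow> A $$ (i,j) = 0"
  shows "det A = det (mat p p (\<lambda>(i,j). A $$ (i,j))) * det (mat (n-p) (n-p) (\<lambda>(i,j). A $$ (i+p,j+p)))"
proof -
  have "A = four_block_mat (mat p p (\<lambda>(i,j). A $$ (i,j))) (0\<^sub>m p (n-p))
     (mat (n-p) p (\<lambda>(i,j). A $$ (i+p,j))) (mat (n-p) (n-p) (\<lambda>(i,j). A $$ (i+p,j+p)))"
    using A p by (intro eq_matI) (auto simp: four_block_mat_def Let_def z)
  then show ?thesis
    by (metis det_four_block_mat_upper_right_zero mat_carrier)
qed

definition dd :: "real \<Rightarrow> nat \<Rightarrow> real" where "dd a m = det (Dmat a m)"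

lemma Dmat_bz: "Dmat a m = mat m m (\<lambda>(i,j). bz a (int i - int j))"
  unfolding Dmat_def by (intro eq_matI) (auto simp: band_bz)

lemma dseq_nat: "dseq a (int m) = dd a m"
  by (cases "m = 0") (auto simp: dseq_def dd_def Dmat_def det_def)

lemma negT: "det (mat m m (\<lambda>(i,j). bz a (int i - int j + 1))) = (-1)^m * dd a m"
proof -
  have "mat m m (\<lambda>(i,j). bz a (int i - int j + 1)) = (-1) \<cdot>\<^sub>m transpose_mat (Dmat a m)"
    unfolding Dmat_bz by (intro eq_matI) (auto simp: bz_def)
  then show ?thesis
    by (simp add: dd_def det_transpose[of _ m] Dmat_def)
qed



lemma Ekmat_bz:
  assumes "1 \<le> k" "k \<le> n + 1"
  shows "Ekmat a n k = mat n n (\<lambda>(i,j). bz a (int (if i < k - 1 then i else i+1) - int j))"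
  unfolding Ekmat_def delete_row_def Emat_def using assms
  by (intro eq_matI) (auto simp: band_bz)

lemma Ek_det:
  assumes k1: "1 \<le> k" and kn: "k \<le> n + 1"
  shows "det (Ekmat a n k) =
              (-1) ^ (n + 1 - k) *
                (dseq a (int k - 1) * dseq a (int n - int k + 1)
                 - dseq a (int k - 2) * dseq a (int n - int k))"
proof -
  define p where "p = k - 1"
  have kp: "k = p + 1" using k1 unfolding p_def by simp
  have pn: "p \<le> n" using kn kp by simp
  define f where "f = (\<lambda>i j. bz a (int (if i < p then i else i+1) - int j))"
  have M: "Ekmat a n k = mat n n (\<lambda>(i,j). f i j)"
    unfolding Ekmat_bz[OF k1 kn] f_def p_def by simp
  have d1: "dseq a (int k - 1) = dd a p" using dseq_nat[of a p] kp by simp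
  have d2: "dseq a (int n - int k + 1) = dd a (n - p)" using dseq_nat[of a "n-p"] kp pn
    by (simp add: of_nat_diff)
  show ?thesis
  proof (cases "p = 0")
    case True
    have "mat n n (\<lambda>(i,j). f i j) = mat n n (\<lambda>(i,j). bz a (int i - int j + 1))"
      unfolding f_def using True by (intro eq_matI) (auto simp: algebra_simps)
    then have "det (Ekmat a n k) = (-1)^n * dd a n" using M negT by simp
    moreover have "dseq a (int k - 2) = 0" using kp True by (simp add: dseq_def)
    ultimately show ?thesis using d1 d2 True kp by (simp add: dd_def Dmat_def det_def)
  next
    case False
    then have p1: "p \<ge> 1" by simp
    define MA where "MA = mat n n (\<lambda>(i,j). if j = p - 1 \<and> p \<le> i then 0 else f i j)"
    define MB where "MB = mat n n (\<lambda>(i,j). if j = p - 1 \<and> i < p then 0 else f i j)"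
    have split1: "det (Ekmat a n k) = det MA + det MB"
      unfolding M MA_def MB_def
      by (rule det_col_split[where c = "p - 1"]) (use p1 pn in auto)
    have dA: "det MA = dd a p * ((-1)^(n-p) * dd a (n-p))"
    proof -
      have "det MA = det (mat p p (\<lambda>(i,j). MA $$ (i,j))) * det (mat (n-p) (n-p) (\<lambda>(i,j). MA $$ (i+p,j+p)))"
        by (rule det_block_ll[OF _ pn]) (auto simp: MA_def f_def bz_def)
      also have "mat p p (\<lambda>(i,j). MA $$ (i,j)) = Dmat a p"
        unfolding Dmat_bz MA_def f_def using pn by (intro eq_matI) auto
      also have "mat (n-p) (n-p) (\<lambda>(i,j). MA $$ (i+p,j+p)) = mat (n-p) (n-p) (\<lambda>(i,j). bz a (int i - int j + 1))"
        unfolding MA_def f_def using pn p1 by (intro eq_matI) (auto simp: algebra_simps)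
      finally show ?thesis using negT by (simp add: dd_def)
    qed
    have dB: "det MB = (if p < n then dd a (p-1) * ((-1)^(n-p-1) * dd a (n-p-1)) else 0)"
    proof (cases "p < n")
      case False
      then have "p = n" using pn by simp
      then have "det MB = 0"
        by (intro det_zero_col[where c = "p - 1" and n = n]) (use p1 in \<open>auto simp: MB_def\<close>)
      then show ?thesis using False by simp
    next
      case True
      define g where "g = (\<lambda>i j. bz a (int (if i < p then i else i+2) - int (if j < p - 1 then j else j+1)))"
      define Q where "Q = mat (n-1) (n-1) (\<lambda>(i,j). g i j)"
      have "det MB = (\<Sum>i\<in>{p}. MB $$ (i, p-1) * cofactor MB i (p-1))"
        by (rule det_expand_col[where n = n]) (use True p1 in \<open>auto simp: MB_def f_def bz_def\<close>)
      also have "\<dots> = - ((-1)^(p + (p-1)) * det (mat_delete MB p (p-1)))"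
        using True p1 by (simp add: MB_def f_def bz_def cofactor_def)
      also have "(-1::real)^(p + (p-1)) = -1"
        using p1 by (simp add: Suc_leI)
      also have "mat_delete MB p (p-1) = Q"
        unfolding MB_def Q_def g_def f_def mat_delete_def using True p1
        by (intro eq_matI) (auto simp: algebra_simps)
      finally have dBQ: "det MB = det Q" by simp
      define QA where "QA = mat (n-1) (n-1) (\<lambda>(i,j). if j = p - 1 \<and> p \<le> i then 0 else g i j)"
      define QB where "QB = mat (n-1) (n-1) (\<lambda>(i,j). if j = p - 1 \<and> i < p then 0 else g i j)"
      have split2: "det Q = det QA + det QB"
        unfolding Q_def QA_def QB_def
        by (rule det_col_split[where c = "p - 1"]) (use p1 True in auto)
      have dQB: "det QB = 0"
      proof -
        have "det QB = det (mat p p (\<lambda>(i,j). QB $$ (i,j))) * det (mat (n-1-p) (n-1-p) (\<lambda>(i,j). QB $$ (i+p,j+p)))"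
          by (rule det_block_ur) (use True p1 in \<open>auto simp: QB_def g_def bz_def\<close>)
        also have "det (mat p p (\<lambda>(i,j). QB $$ (i,j))) = 0"
          by (rule det_zero_col[where c = "p - 1"]) (use True p1 in \<open>auto simp: QB_def\<close>)
        finally show ?thesis by simp
      qed
      define R where "R = mat (n-2) (n-2) (\<lambda>(i,j). bz a (int (if i < p - 1 then i else i+3) - int (if j < p - 1 then j else j+2)))"
      have "det QA = (\<Sum>i\<in>{p-1}. QA $$ (i, p-1) * cofactor QA i (p-1))"
        by (rule det_expand_col[where n = "n-1"]) (use True p1 in \<open>auto simp: QA_def g_def bz_def\<close>)
      also have "\<dots> = (-1)^((p-1) + (p-1)) * det (mat_delete QA (p-1) (p-1))"
        using True p1 by (simp add: QA_def g_def bz_def cofactor_def)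
      also have "mat_delete QA (p-1) (p-1) = R"
        unfolding QA_def R_def g_def mat_delete_def using True p1
        by (intro eq_matI) (auto simp: algebra_simps)
      finally have dQA: "det QA = det R" by simp
      have "det R = det (mat (p-1) (p-1) (\<lambda>(i,j). R $$ (i,j))) * det (mat (n-2-(p-1)) (n-2-(p-1)) (\<lambda>(i,j). R $$ (i+(p-1),j+(p-1))))"
        by (rule det_block_ll) (use True p1 in \<open>auto simp: R_def bz_def\<close>)
      also have "mat (p-1) (p-1) (\<lambda>(i,j). R $$ (i,j)) = Dmat a (p-1)"
        unfolding Dmat_bz R_def using True by (intro eq_matI) auto
      also have "mat (n-2-(p-1)) (n-2-(p-1)) (\<lambda>(i,j). R $$ (i+(p-1),j+(p-1))) = mat (n-p-1) (n-p-1) (\<lambda>(i,j). bz a (int i - int j + 1))"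
        unfolding R_def using True p1 by (intro eq_matI) (auto simp: algebra_simps)
      finally have "det R = dd a (p-1) * ((-1)^(n-p-1) * dd a (n-p-1))"
        using negT by (simp add: dd_def)
      then show ?thesis using True dBQ split2 dQB dQA by simp
    qed
    have d3: "dseq a (int k - 2) = dd a (p-1)" using dseq_nat[of a "p-1"] kp p1
      by (simp add: of_nat_diff)
    have d4: "dseq a (int n - int k) = (if p < n then dd a (n-p-1) else 0)"
      using dseq_nat[of a "n-p-1"] kp pn by (auto simp: of_nat_diff dseq_def)
    have sg: "n + 1 - k = n - p" using kp by simp
    show ?thesis
    proof (cases "p < n")
      case True
      have "(-1::real)^(n-p) = - ((-1)^(n-p-1))"
        using True by (metis Suc_diff_Suc minus_one_mult_self mult_minus1 power_Suc diff_Suc_1 zero_less_diff)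
      then show ?thesis using True split1 dA dB d1 d2 d3 d4 sg by (simp add: algebra_simps)
    next
      case False
      then show ?thesis using split1 dA dB d1 d2 d3 d4 sg by (simp add: algebra_simps)
    qed
  qed
qed



lemma det_expand_row:
  assumes A: "A \<in> carrier_mat n n" and r: "r < n" and S: "S \<subseteq> {..<n}"
    and z: "\<And>j. j < n \<Longrightarrow> j \<notin> S \<Longrightarrow> A $$ (r,j) = 0"
  shows "det A = (\<Sum>j\<in>S. A $$ (r,j) * cofactor A r j)"
proof -
  have "det A = (\<Sum>j<n. A $$ (r,j) * cofactor A r j)"
    by (rule laplace_expansion_row[OF A r])
  also have "\<dots> = (\<Sum>j\<in>S. A $$ (r,j) * cofactor A r j)"
    by (rule sum.mono_neutral_right) (use S z in auto)
  finally show ?thesis .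
qed

lemma dd_rec: "dd a (q+3) = - a * dd a (q+2) - a * dd a (q+1) - dd a q"
proof -
  define P where "P = mat (q+2) (q+2) (\<lambda>(i,j). bz a (int (if i < q+1 then i else i+1) - int j))"
  define P2 where "P2 = mat (q+1) (q+1) (\<lambda>(i,j). bz a (int i - int (if j < q then j else j+1)))"
  have "dd a (q+3) = (\<Sum>i\<in>{q+1, q+2}. Dmat a (q+3) $$ (i, q+2) * cofactor (Dmat a (q+3)) i (q+2))"
    unfolding dd_def by (rule det_expand_col[where n = "q+3"]) (auto simp: Dmat_bz bz_def)
  also have "\<dots> = cofactor (Dmat a (q+3)) (q+1) (q+2) - a * cofactor (Dmat a (q+3)) (q+2) (q+2)"
    by (simp add: Dmat_bz bz_def)
  also have "cofactor (Dmat a (q+3)) (q+2) (q+2) = dd a (q+2)"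
  proof -
    have "mat_delete (Dmat a (q+3)) (q+2) (q+2) = Dmat a (q+2)"
      unfolding Dmat_bz mat_delete_def by (intro eq_matI) auto
    then show ?thesis unfolding cofactor_def dd_def by simp
  qed
  also have "cofactor (Dmat a (q+3)) (q+1) (q+2) = - det P"
  proof -
    have "mat_delete (Dmat a (q+3)) (q+1) (q+2) = P"
      unfolding Dmat_bz mat_delete_def P_def by (intro eq_matI) (auto simp: algebra_simps)
    moreover have "(-1::real)^(q+1+(q+2)) = -1"
      by (simp add: power_add)
    ultimately show ?thesis unfolding cofactor_def by simp
  qed
  also have "det P = a * dd a (q+1) + dd a q"
  proof -
    have "det P = (\<Sum>j\<in>{q, q+1}. P $$ (q+1, j) * cofactor P (q+1) j)"
      by (rule det_expand_row[where n = "q+2"]) (auto simp: P_def bz_def)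
    also have "\<dots> = - cofactor P (q+1) q + a * cofactor P (q+1) (q+1)"
      by (simp add: P_def bz_def)
    also have "cofactor P (q+1) (q+1) = dd a (q+1)"
    proof -
      have "mat_delete P (q+1) (q+1) = Dmat a (q+1)"
        unfolding Dmat_bz mat_delete_def P_def by (intro eq_matI) auto
      then show ?thesis unfolding cofactor_def dd_def by simp
    qed
    also have "cofactor P (q+1) q = - det P2"
    proof -
      have "mat_delete P (q+1) q = P2"
        unfolding mat_delete_def P_def P2_def by (intro eq_matI) (auto simp: algebra_simps)
      moreover have "(-1::real)^(q+1+q) = -1"
        by (simp add: power_add)
      ultimately show ?thesis unfolding cofactor_def by simp
    qed
    also have "det P2 = dd a q"
    proof -
      have "det P2 = (\<Sum>i\<in>{q}. P2 $$ (i, q) * cofactor P2 i q)"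
        by (rule det_expand_col[where n = "q+1"]) (auto simp: P2_def bz_def)
      also have "\<dots> = cofactor P2 q q"
        by (simp add: P2_def bz_def)
      finally have h: "det P2 = cofactor P2 q q" .
      have "mat_delete P2 q q = Dmat a q"
        unfolding Dmat_bz mat_delete_def P2_def by (intro eq_matI) auto
      then show ?thesis using h unfolding cofactor_def dd_def by simp
    qed
    finally show ?thesis by simp
  qed
  finally show ?thesis by (simp add: algebra_simps)
qed



lemma dd0: "dd a 0 = 1" unfolding dd_def Dmat_def by simp

lemma dd1: "dd a 1 = - a"
proof -
  have "dd a 1 = (\<Sum>i\<in>{0}. Dmat a 1 $$ (i, 0) * cofactor (Dmat a 1) i 0)"
    unfolding dd_def by (rule det_expand_col[where n = 1]) (auto simp: Dmat_bz)
  also have "\<dots> = - a" by (simp add: Dmat_bz bz_def cofactor_def mat_delete_def)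
  finally show ?thesis .
qed

lemma dd2: "dd a 2 = a^2 - a"
proof -
  have "dd a 2 = (\<Sum>i\<in>{0,1}. Dmat a 2 $$ (i, 1) * cofactor (Dmat a 2) i 1)"
    unfolding dd_def by (rule det_expand_col[where n = 2]) (auto simp: Dmat_bz)
  also have "\<dots> = cofactor (Dmat a 2) 0 1 - a * cofactor (Dmat a 2) 1 1"
    by (simp add: Dmat_bz bz_def)
  also have "cofactor (Dmat a 2) 0 1 = - a"
  proof -
    have "mat_delete (Dmat a 2) 0 1 = mat 1 1 (\<lambda>_. a)"
      unfolding Dmat_bz mat_delete_def by (intro eq_matI) (auto simp: bz_def)
    moreover have "det (mat 1 1 (\<lambda>_. a)) = a"
    proof -
      have "det (mat 1 1 (\<lambda>_. a)) = (\<Sum>i\<in>{0}. mat 1 1 (\<lambda>_. a) $$ (i, 0) * cofactor (mat 1 1 (\<lambda>_. a)) i 0)"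
        by (rule det_expand_col[where n = 1]) auto
      then show ?thesis by (simp add: cofactor_def mat_delete_def)
    qed
    ultimately show ?thesis unfolding cofactor_def by simp
  qed
  also have "cofactor (Dmat a 2) 1 1 = - a"
  proof -
    have "mat_delete (Dmat a 2) 1 1 = Dmat a 1"
      unfolding Dmat_bz mat_delete_def by (intro eq_matI) auto
    then show ?thesis unfolding cofactor_def using dd1[of a] by (simp add: dd_def)
  qed
  finally show ?thesis by (simp add: power2_eq_square)
qed

lemma fps_deriv_funpow_nth:
  fixes F :: "real fps"
  shows "fps_nth ((fps_deriv ^^ k) F) m = fps_nth F (m + k) * fact (m + k) / fact m"
proof (induction k arbitrary: m)
  case 0 then show ?case by simp
next
  case (Suc k)
  have "fps_nth ((fps_deriv ^^ Suc k) F) m = of_nat (m+1) * fps_nth ((fps_deriv ^^ k) F) (m+1)"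
    by (simp add: fps_deriv_def)
  also have "\<dots> = of_nat (m+1) * (fps_nth F (m + 1 + k) * fact (m + 1 + k) / fact (m+1))"
    using Suc by simp
  also have "\<dots> = fps_nth F (m + Suc k) * fact (m + Suc k) / fact m"
  proof -
    have h: "(fact (m+1)::real) = of_nat (m+1) * fact m" by simp
    have h2: "m + 1 + k = m + Suc k" by simp
    have h3: "(of_nat (m+1)::real) \<noteq> 0" by simp
    show ?thesis unfolding h h2 using h3 by (simp add: field_simps del: of_nat_Suc of_nat_add)
  qed
  finally show ?case .
qed

lemma funpow_deriv_expansion:
  fixes f :: "real \<Rightarrow> real"
  assumes "f has_fps_expansion F"
  shows "(deriv ^^ k) f has_fps_expansion (fps_deriv ^^ k) F"
  using assms by (induction k) (auto intro: has_fps_expansion_deriv)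

lemma expansion_at_0:
  fixes f :: "real \<Rightarrow> real"
  assumes "f has_fps_expansion F"
  shows "f 0 = fps_nth F 0"
proof -
  have "eventually (\<lambda>z. eval_fps F z = f z) (nhds 0)" using assms by (simp add: has_fps_expansion_def)
  then have "eval_fps F 0 = f 0" by (rule eventually_nhds_x_imp_x)
  then show ?thesis by (simp add: eval_fps_at_0)
qed

lemma part2:
  fixes a :: real
  shows "dd a k = (deriv ^^ k) (\<lambda>x::real. 1 / (1 + a * x + a * x ^ 2 + x ^ 3)) 0 / fact k"
proof -
  define Pf :: "real fps" where "Pf = 1 + fps_const a * fps_X + fps_const a * fps_X ^ 2 + fps_X ^ 3"
  define Df :: "real fps" where "Df = Abs_fps (dd a)"
  have "Pf * Df = 1"
  proof (rule fps_ext)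
    fix n
    have e: "Pf * Df = Df + fps_const a * (fps_X ^ 1 * Df) + fps_const a * (fps_X ^ 2 * Df) + fps_X ^ 3 * Df"
      unfolding Pf_def by (simp add: algebra_simps)
    show "fps_nth (Pf * Df) n = fps_nth 1 n"
    proof (cases "n < 3")
      case True
      then have "n = 0 \<or> n = 1 \<or> n = 2" by auto
      moreover have "dd a 2 = a * a - a" using dd2[of a] by (simp add: power2_eq_square)
      ultimately show ?thesis unfolding e using dd0[of a] dd1[of a]
        by (elim disjE) (simp_all add: fps_X_power_mult_nth Df_def)
    next
      case False
      then obtain q where q: "n = q + 3" by (metis add.commute le_Suc_ex not_less)
      have "fps_nth (Pf * Df) (q+3) = dd a (q+3) + a * dd a (q+2) + a * dd a (q+1) + dd a q"
        unfolding e by (simp add: fps_X_power_mult_nth Df_def)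
      then show ?thesis unfolding q using dd_rec[of a q] by simp
    qed
  qed
  then have invP: "inverse Pf = Df" by (rule fps_inverse_unique)
  have hp: "(\<lambda>x::real. 1 + a * x + a * x ^ 2 + x ^ 3) has_fps_expansion Pf"
    unfolding Pf_def
    by (intro has_fps_expansion_add has_fps_expansion_cmult_left has_fps_expansion_fps_X_power
          has_fps_expansion_fps_X has_fps_expansion_1)
  have "(\<lambda>x::real. inverse (1 + a * x + a * x ^ 2 + x ^ 3)) has_fps_expansion inverse Pf"
    by (rule has_fps_expansion_inverse[OF hp]) (simp add: Pf_def)
  then have hf: "(\<lambda>x::real. 1 / (1 + a * x + a * x ^ 2 + x ^ 3)) has_fps_expansion Df"
    unfolding invP by (simp add: inverse_eq_divide)
  have "(deriv ^^ k) (\<lambda>x::real. 1 / (1 + a * x + a * x ^ 2 + x ^ 3)) 0 = fps_nth ((fps_deriv ^^ k) Df) 0"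
    by (rule expansion_at_0[OF funpow_deriv_expansion[OF hf]])
  also have "\<dots> = dd a k * fact k"
    by (simp add: fps_deriv_funpow_nth Df_def)
  finally show ?thesis by simp
qed



lemma vieta:
  fixes al be ga :: complex and a :: real
  assumes ha: "al ^ 3 + a * al ^ 2 + a * al + 1 = 0"
      and hb: "be ^ 3 + a * be ^ 2 + a * be + 1 = 0"
      and hc: "ga ^ 3 + a * ga ^ 2 + a * ga + 1 = 0"
      and d1: "al \<noteq> be" and d2: "be \<noteq> ga" and d3: "al \<noteq> ga"
  shows "al + be + ga = - of_real a" "al*be + be*ga + ga*al = of_real a" "al*be*ga = -1"
proof -
  define A where "A = complex_of_real a"
  note ha' = ha[folded A_def] and hb' = hb[folded A_def] and hc' = hc[folded A_def]
  have "(al - be) * (al^2 + al*be + be^2 + A*(al+be) + A) = (al ^ 3 + A * al ^ 2 + A * al + 1) - (be ^ 3 + A * be ^ 2 + A * be + 1)"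
    by (simp add: algebra_simps power3_eq_cube power2_eq_square)
  hence "(al - be) * (al^2 + al*be + be^2 + A*(al+be) + A) = 0"
    using ha' hb' by simp
  hence e1: "al^2 + al*be + be^2 + A*(al+be) + A = 0" using d1 by simp
  have "(be - ga) * (be^2 + be*ga + ga^2 + A*(be+ga) + A) = (be ^ 3 + A * be ^ 2 + A * be + 1) - (ga ^ 3 + A * ga ^ 2 + A * ga + 1)"
    by (simp add: algebra_simps power3_eq_cube power2_eq_square)
  hence "(be - ga) * (be^2 + be*ga + ga^2 + A*(be+ga) + A) = 0"
    using hb' hc' by simp
  hence e2: "be^2 + be*ga + ga^2 + A*(be+ga) + A = 0" using d2 by simp
  have "(al - ga) * (al + be + ga + A) = (al^2 + al*be + be^2 + A*(al+be) + A) - (be^2 + be*ga + ga^2 + A*(be+ga) + A)"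
    by (simp add: algebra_simps power2_eq_square)
  hence "(al - ga) * (al + be + ga + A) = 0"
    using e1 e2 by simp
  hence s1: "al + be + ga + A = 0" using d3 by simp
  then show "al + be + ga = - of_real a" unfolding A_def by (simp add: eq_neg_iff_add_eq_0)
  have "al*be + be*ga + ga*al - A = (al+be) * (al + be + ga + A) - (al^2 + al*be + be^2 + A*(al+be) + A)"
    by (simp add: algebra_simps power2_eq_square)
  hence s2: "al*be + be*ga + ga*al = A" using s1 e1 by simp
  then show "al*be + be*ga + ga*al = of_real a" unfolding A_def .
  have "al*be*ga + 1 = (al ^ 3 + A * al ^ 2 + A * al + 1) - (al + be + ga + A) * al^2 + (al*be + be*ga + ga*al - A) * al"
    by (simp add: algebra_simps power2_eq_square power3_eq_cube)
  moreover have z2: "al*be + be*ga + ga*al - A = 0" using s2 by simp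
  ultimately have "al*be*ga + 1 = 0" unfolding s1 z2 ha' by simp
  then show "al*be*ga = -1" by (simp add: eq_neg_iff_add_eq_0)
qed

lemma closed_form:
  fixes al be ga :: complex and a :: real and d :: "nat \<Rightarrow> real"
  assumes ha: "al ^ 3 + a * al ^ 2 + a * al + 1 = 0"
      and hb: "be ^ 3 + a * be ^ 2 + a * be + 1 = 0"
      and hc: "ga ^ 3 + a * ga ^ 2 + a * ga + 1 = 0"
      and d1: "al \<noteq> be" and d2: "be \<noteq> ga" and d3: "al \<noteq> ga"
      and b0: "d 0 = 1" and b1: "d 1 = - a" and b2: "d 2 = a^2 - a"
      and rec: "\<And>q. d (q+3) = - a * d (q+2) - a * d (q+1) - d q"
  shows "complex_of_real (d k) =
                 1 / (al ^ (k + 1) * (al - be) * (ga - al))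
               + 1 / (be ^ (k + 1) * (al - be) * (be - ga))
               + 1 / (ga ^ (k + 1) * (ga - al) * (be - ga))"
proof -
  define A where "A = complex_of_real a"
  have v1: "al + be + ga = - A" and v2: "al*be + be*ga + ga*al = A" and v3: "al*be*ga = -1"
    using vieta[OF ha hb hc d1 d2 d3] unfolding A_def by auto
  have nz: "al \<noteq> 0" "be \<noteq> 0" "ga \<noteq> 0" using v3 by auto
  define P where "P = (al - be) * (be - ga) * (ga - al)"
  have Pnz: "P \<noteq> 0" using d1 d2 d3 unfolding P_def by auto
  define r where "r = (\<lambda>k. (be - ga) / P * (inverse al)^(k+1) + (ga - al) / P * (inverse be)^(k+1)
     + (al - be) / P * (inverse ga)^(k+1))"
  have rr: "r k = 1 / (al ^ (k + 1) * (al - be) * (ga - al))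
               + 1 / (be ^ (k + 1) * (al - be) * (be - ga))
               + 1 / (ga ^ (k + 1) * (ga - al) * (be - ga))" for k
  proof -
    have g: "x / (x * R) * inverse w ^ (k+1) = 1 / (w ^ (k+1) * R)" if "x \<noteq> 0" for x w R :: complex
      using that by (cases "R = 0"; cases "w = 0") (simp_all add: field_simps power_inverse)
    have P1: "P = (be - ga) * ((al - be) * (ga - al))" unfolding P_def by (simp add: ac_simps)
    have P2: "P = (ga - al) * ((al - be) * (be - ga))" unfolding P_def by (simp add: ac_simps)
    have P3: "P = (al - be) * ((ga - al) * (be - ga))" unfolding P_def by (simp add: ac_simps)
    have e1: "(be - ga) / P * inverse al ^ (k+1) = 1 / (al ^ (k + 1) * ((al - be) * (ga - al)))"
      unfolding P1 by (rule g) (use d2 in simp)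
    have e2: "(ga - al) / P * inverse be ^ (k+1) = 1 / (be ^ (k + 1) * ((al - be) * (be - ga)))"
      unfolding P2 by (rule g) (use d3 in simp)
    have e3: "(al - be) / P * inverse ga ^ (k+1) = 1 / (ga ^ (k + 1) * ((ga - al) * (be - ga)))"
      unfolding P3 by (rule g) (use d1 in simp)
    show ?thesis unfolding r_def e1 e2 e3 by (simp add: mult.assoc)
  qed
  have ia: "inverse al = - (be * ga)" using v3 nz by (simp add: field_simps)
  have ib: "inverse be = - (ga * al)" using v3 nz by (simp add: field_simps)
  have ic: "inverse ga = - (al * be)" using v3 nz by (simp add: field_simps)
  have root: "u^3 + A*u^2 + A*u + 1 = 0" if "x ^ 3 + a * x ^ 2 + a * x + 1 = 0" "x \<noteq> 0" "u = inverse x" for x u :: complex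
  proof -
    have ux: "u * x = 1" using that(2,3) by simp
    have "x^3 * (u^3 + A*u^2 + A*u + 1) - (x ^ 3 + A * x ^ 2 + A * x + 1) = (u*x - 1) * ((u*x)^2 + u*x + 1 + A*x*(u*x+1) + A*x^2)"
      by (simp add: algebra_simps power3_eq_cube power2_eq_square)
    hence "x^3 * (u^3 + A*u^2 + A*u + 1) = x ^ 3 + a * x ^ 2 + a * x + 1"
      using ux unfolding A_def by simp
    then show ?thesis using that by simp
  qed
  have rec_u: "u^(q+4) + A * u^(q+3) + A * u^(q+2) + u^(q+1) = 0" if "u^3 + A*u^2 + A*u + 1 = 0" for u q
  proof -
    have "u^(q+4) + A * u^(q+3) + A * u^(q+2) + u^(q+1) = u^(q+1) * (u^3 + A*u^2 + A*u + 1)"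
      by (simp add: algebra_simps power_add power2_eq_square power3_eq_cube numeral_eq_Suc)
    then show ?thesis using that by simp
  qed
  have r_rec: "r (q+3) = - A * r (q+2) - A * r (q+1) - r q" for q
  proof -
    have "r (q+3) + A * r (q+2) + A * r (q+1) + r q =
      (be - ga) / P * ((inverse al)^(q+4) + A * (inverse al)^(q+3) + A * (inverse al)^(q+2) + (inverse al)^(q+1))
      + (ga - al) / P * ((inverse be)^(q+4) + A * (inverse be)^(q+3) + A * (inverse be)^(q+2) + (inverse be)^(q+1))
      + (al - be) / P * ((inverse ga)^(q+4) + A * (inverse ga)^(q+3) + A * (inverse ga)^(q+2) + (inverse ga)^(q+1))"
      unfolding r_def by (simp add: algebra_simps numeral_eq_Suc)
    also have "\<dots> = 0"
      using rec_u[OF root[OF ha nz(1) refl]] rec_u[OF root[OF hb nz(2) refl]] rec_u[OF root[OF hc nz(3) refl]]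
      by simp
    finally have h0: "r (q+3) + A * r (q+2) + A * r (q+1) + r q = 0" .
    have "r (q+3) = (r (q+3) + A * r (q+2) + A * r (q+1) + r q) - (A * r (q+2) + A * r (q+1) + r q)"
      by simp
    also have "\<dots> = - A * r (q+2) - A * r (q+1) - r q" unfolding h0 by simp
    finally show ?thesis .
  qed
  have rN: "r j = ((be-ga)*(inverse al)^(j+1) + (ga-al)*(inverse be)^(j+1) + (al-be)*(inverse ga)^(j+1)) / P" for j
    unfolding r_def by (simp add: add_divide_distrib)
  have r0: "r 0 = 1"
  proof -
    have N0: "(be - ga) * (-(be*ga))^1 + (ga - al) * (-(ga*al))^1 + (al - be) * (-(al*be))^1 = 1 * P"
      unfolding P_def by (simp add: algebra_simps)
    have t: "(0::nat) + 1 = 1" by simp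
    have N: "(be - ga) * (-(be*ga))^(0+1) + (ga - al) * (-(ga*al))^(0+1) + (al - be) * (-(al*be))^(0+1) = 1 * P"
      unfolding t by (rule N0)
    show ?thesis unfolding rN ia ib ic N using Pnz by simp
  qed
  have r1: "r 1 = - A"
  proof -
    have "(be - ga) * (-(be*ga))^2 + (ga - al) * (-(ga*al))^2 + (al - be) * (-(al*be))^2 - (- A * P)
       = - (al*be + be*ga + ga*al - A) * P"
      unfolding P_def by (simp add: algebra_simps power2_eq_square)
    then have N0: "(be - ga) * (-(be*ga))^2 + (ga - al) * (-(ga*al))^2 + (al - be) * (-(al*be))^2 = - A * P"
      using v2 by (simp add: eq_neg_iff_add_eq_0)
    have t: "(1::nat) + 1 = 2" by simp
    have N: "(be - ga) * (-(be*ga))^(1+1) + (ga - al) * (-(ga*al))^(1+1) + (al - be) * (-(al*be))^(1+1) = - A * P"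
      unfolding t by (rule N0)
    show ?thesis unfolding rN ia ib ic N using Pnz by simp
  qed
  have r2: "r 2 = A^2 - A"
  proof -
    have "(be - ga) * (-(be*ga))^3 + (ga - al) * (-(ga*al))^3 + (al - be) * (-(al*be))^3 - (A^2 - A) * P
       = ((al*be + be*ga + ga*al - A) * (al*be + be*ga + ga*al + A) - (al+be+ga+A) * (al*be*ga+1)
          + (al+be+ga+A) + A * (al*be*ga+1)) * P"
      unfolding P_def by (simp add: algebra_simps power2_eq_square power3_eq_cube)
    moreover have "al+be+ga+A = 0" using v1 by (simp add: eq_neg_iff_add_eq_0[symmetric])
    moreover have "al*be*ga+1 = 0" using v3 by simp
    ultimately have N0: "(be - ga) * (-(be*ga))^3 + (ga - al) * (-(ga*al))^3 + (al - be) * (-(al*be))^3 = (A^2 - A) * P"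
      using v2 by simp
    have t: "(2::nat) + 1 = 3" by simp
    have N: "(be - ga) * (-(be*ga))^(2+1) + (ga - al) * (-(ga*al))^(2+1) + (al - be) * (-(al*be))^(2+1) = (A^2 - A) * P"
      unfolding t by (rule N0)
    show ?thesis unfolding rN ia ib ic N using Pnz by simp
  qed
  have "complex_of_real (d k) = r k"
  proof (induction k rule: less_induct)
    case (less k)
    show ?case
    proof (cases "k < 3")
      case True
      then have "k = 0 \<or> k = 1 \<or> k = 2" by auto
      then show ?thesis using r0 r1 r2 b0 b1 b2 unfolding A_def by auto
    next
      case False
      then obtain q where q: "k = q + 3" by (metis add.commute le_Suc_ex not_less)
      have "complex_of_real (d k) = - A * d (q+2) - A * d (q+1) - d q"
        unfolding q rec A_def by simp
      also have "\<dots> = r k" using less q r_rec by simp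
      finally show ?thesis .
    qed
  qed
  then show ?thesis using rr by simp
qed


theorem theorem2p3:
  fixes a :: real
  assumes "a > 0"
  shows "(\<forall>n k. n \<ge> 1 \<longrightarrow> 1 \<le> k \<longrightarrow> k \<le> n + 1 \<longrightarrow>
            det (Ekmat a n k) =
              (-1) ^ (n + 1 - k) *
                (dseq a (int k - 1) * dseq a (int n - int k + 1)
                 - dseq a (int k - 2) * dseq a (int n - int k)))
       \<and> (\<forall>k::nat. dseq a (int k) =
            (deriv ^^ k) (\<lambda>x::real. 1 / (1 + a * x + a * x ^ 2 + x ^ 3)) 0 / fact k)
       \<and> (\<forall>(\<alpha>::complex) (\<beta>::complex) (\<gamma>::complex).
            \<alpha> ^ 3 + a * \<alpha> ^ 2 + a * \<alpha> + 1 = 0 \<longrightarrow>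
            \<beta> ^ 3 + a * \<beta> ^ 2 + a * \<beta> + 1 = 0 \<longrightarrow>
            \<gamma> ^ 3 + a * \<gamma> ^ 2 + a * \<gamma> + 1 = 0 \<longrightarrow>
            \<alpha> \<noteq> \<beta> \<longrightarrow> \<beta> \<noteq> \<gamma> \<longrightarrow> \<alpha> \<noteq> \<gamma> \<longrightarrow>
            (\<forall>k::nat. k \<ge> 1 \<longrightarrow>
               complex_of_real (dseq a (int k)) =
                 1 / (\<alpha> ^ (k + 1) * (\<alpha> - \<beta>) * (\<gamma> - \<alpha>))
               + 1 / (\<beta> ^ (k + 1) * (\<alpha> - \<beta>) * (\<beta> - \<gamma>))
               + 1 / (\<gamma> ^ (k + 1) * (\<gamma> - \<alpha>) * (\<beta> - \<gamma>))))"
proof -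
  have A: "\<forall>n k. n \<ge> 1 \<longrightarrow> 1 \<le> k \<longrightarrow> k \<le> n + 1 \<longrightarrow>
            det (Ekmat a n k) =
              (-1) ^ (n + 1 - k) *
                (dseq a (int k - 1) * dseq a (int n - int k + 1)
                 - dseq a (int k - 2) * dseq a (int n - int k))"
    using Ek_det by blast
  have B: "\<forall>k::nat. dseq a (int k) =
            (deriv ^^ k) (\<lambda>x::real. 1 / (1 + a * x + a * x ^ 2 + x ^ 3)) 0 / fact k"
    using part2 dseq_nat by simp
  have C: "\<forall>(\<alpha>::complex) (\<beta>::complex) (\<gamma>::complex).
            \<alpha> ^ 3 + a * \<alpha> ^ 2 + a * \<alpha> + 1 = 0 \<longrightarrow>
            \<beta> ^ 3 + a * \<beta> ^ 2 + a * \<beta> + 1 = 0 \<longrightarrow>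
            \<gamma> ^ 3 + a * \<gamma> ^ 2 + a * \<gamma> + 1 = 0 \<longrightarrow>
            \<alpha> \<noteq> \<beta> \<longrightarrow> \<beta> \<noteq> \<gamma> \<longrightarrow> \<alpha> \<noteq> \<gamma> \<longrightarrow>
            (\<forall>k::nat. k \<ge> 1 \<longrightarrow>
               complex_of_real (dseq a (int k)) =
                 1 / (\<alpha> ^ (k + 1) * (\<alpha> - \<beta>) * (\<gamma> - \<alpha>))
               + 1 / (\<beta> ^ (k + 1) * (\<alpha> - \<beta>) * (\<beta> - \<gamma>))
               + 1 / (\<gamma> ^ (k + 1) * (\<gamma> - \<alpha>) * (\<beta> - \<gamma>)))"
  proof (intro allI impI)
    fix al be ga :: complex and k :: nat
    assume h: "al ^ 3 + a * al ^ 2 + a * al + 1 = 0" "be ^ 3 + a * be ^ 2 + a * be + 1 = 0"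
      "ga ^ 3 + a * ga ^ 2 + a * ga + 1 = 0" "al \<noteq> be" "be \<noteq> ga" "al \<noteq> ga"
    show "complex_of_real (dseq a (int k)) =
                 1 / (al ^ (k + 1) * (al - be) * (ga - al))
               + 1 / (be ^ (k + 1) * (al - be) * (be - ga))
               + 1 / (ga ^ (k + 1) * (ga - al) * (be - ga))"
      unfolding dseq_nat
      by (rule closed_form[OF h dd0 dd1 dd2 dd_rec])
  qed
  show ?thesis using A B C by blast
qed

end
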